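(* Let $d\ge1$, let $H$ be a hypergraph of $d$-intervals and let $w$ be a weight system on $H$. Then $\tau_w(H)\le d\,\tau^*_w(H)$.
   Context: A $d$-interval is a union of at most $d$ pairwise disjoint closed intervals of the real line $\mathbb{R}$. A hypergraph of $d$-intervals is a finite family $H$ of $d$-intervals, regarded as a hypergraph whose vertices are the points of $\mathbb{R}$ and whose edges are the members of $H$. A weight system on $H$ is a function $w:H\to\mathbb{N}$. A $w$-cover is a finitely supported function $g:\mathbb{R}\to\mathbb{N}$ with $\sum_{v\in h}g(v)\ge w(h)$ for every $h\in H$; $\tau_w(H)$ is the minimum of $\sum_v g(v)$ over all $w$-covers. A fractional $w$-cover is defined in the same way but with $g:\mathbb{R}\to\mathbb{R}_{\ge0}$ (finitely supported); $\tau^*_w(H)$ is the infimum of $\sum_v g(v)$ over all fractional $w$-covers. *)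

theory Defs
  imports "HOL-Analysis.Analysis"
begin

definition d_interval :: "nat \<Rightarrow> real set \<Rightarrow> bool" where
  "d_interval d S \<longleftrightarrow> (\<exists>I. finite I \<and> card I \<le> d \<and>
      (\<forall>J\<in>I. \<exists>a b. a \<le> b \<and> J = {a..b}) \<and> pairwise disjnt I \<and> S = \<Union>I)"

definition w_cover :: "real set set \<Rightarrow> (real set \<Rightarrow> nat) \<Rightarrow> (real \<Rightarrow> nat) \<Rightarrow> bool" where
  "w_cover H w g \<longleftrightarrow> finite {v. g v \<noteq> 0} \<and>
     (\<forall>h\<in>H. (\<Sum>v\<in>h \<inter> {v. g v \<noteq> 0}. g v) \<ge> w h)"

definition frac_w_cover :: "real set set \<Rightarrow> (real set \<Rightarrow> nat) \<Rightarrow> (real \<Rightarrow> real) \<Rightarrow> bool" where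
  "frac_w_cover H w g \<longleftrightarrow> (\<forall>v. g v \<ge> 0) \<and> finite {v. g v \<noteq> 0} \<and>
     (\<forall>h\<in>H. (\<Sum>v\<in>h \<inter> {v. g v \<noteq> 0}. g v) \<ge> real (w h))"

text \<open>Cover numbers as infima in the extended reals (= \<infinity> if no cover exists).\<close>
definition tau_w :: "real set set \<Rightarrow> (real set \<Rightarrow> nat) \<Rightarrow> ereal" where
  "tau_w H w = (INF g\<in>{g. w_cover H w g}. ereal (real (\<Sum>v\<in>{v. g v \<noteq> 0}. g v)))"

definition tau_star_w :: "real set set \<Rightarrow> (real set \<Rightarrow> nat) \<Rightarrow> ereal" where
  "tau_star_w H w = (INF g\<in>{g. frac_w_cover H w g}. ereal (\<Sum>v\<in>{v. g v \<noteq> 0}. g v))"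

end

theory Submission
  imports Defs
begin

definition Fu :: "real set \<Rightarrow> (real \<Rightarrow> real) \<Rightarrow> real \<Rightarrow> real" where
  "Fu S c x = (\<Sum>v\<in>{v\<in>S. v \<le> x}. c v)"
definition Fl :: "real set \<Rightarrow> (real \<Rightarrow> real) \<Rightarrow> real \<Rightarrow> real" where
  "Fl S c x = (\<Sum>v\<in>{v\<in>S. v < x}. c v)"

lemma Fu_Fl:
  assumes "finite S"
  shows "Fu S c x = Fl S c x + (if x \<in> S then c x else 0)"
proof (cases "x \<in> S")
  case True
  have "{v\<in>S. v \<le> x} = insert x {v\<in>S. v < x}" using True by auto
  then show ?thesis using True assms by (simp add: Fu_def Fl_def)
next
  case False
  have "{v\<in>S. v \<le> x} = {v\<in>S. v < x}" using False by (auto simp: order_le_less)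
  then show ?thesis using False by (simp add: Fu_def Fl_def)
qed

lemma tele_lt:
  assumes "finite S"
  shows "\<forall>b. card (S\<inter>{a..<b}) = n \<longrightarrow> a \<le> b \<longrightarrow>
    (\<Sum>v\<in>S\<inter>{a..<b}. \<lfloor>Fu S c v\<rfloor> - \<lfloor>Fl S c v\<rfloor>) = \<lfloor>Fl S c b\<rfloor> - \<lfloor>Fl S c a\<rfloor>"
proof (induction n rule: less_induct)
  case (less n)
  show ?case
  proof (intro allI impI)
    fix b assume cn: "card (S\<inter>{a..<b}) = n" and ab: "a \<le> b"
    have fin: "finite (S\<inter>{a..<b})" using assms by simp
    show "(\<Sum>v\<in>S\<inter>{a..<b}. \<lfloor>Fu S c v\<rfloor> - \<lfloor>Fl S c v\<rfloor>) = \<lfloor>Fl S c b\<rfloor> - \<lfloor>Fl S c a\<rfloor>"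
    proof (cases "S\<inter>{a..<b} = {}")
      case True
      have "{v\<in>S. v<b} = {v\<in>S. v<a}" using True ab by force
      then show ?thesis using True by (simp add: Fl_def)
    next
      case False
      define m where "m = Max (S\<inter>{a..<b})"
      have mS: "m \<in> S\<inter>{a..<b}" using Max_in[OF fin False] m_def by simp
      have mx: "\<forall>v\<in>S\<inter>{a..<b}. v \<le> m" using Max_ge[OF fin] m_def by simp
      have split: "S\<inter>{a..<b} = insert m (S\<inter>{a..<m})"
      proof
        show "S\<inter>{a..<b} \<subseteq> insert m (S\<inter>{a..<m})"
        proof
          fix v assume v: "v \<in> S\<inter>{a..<b}"
          then have "v \<le> m" using mx by blast
          then show "v \<in> insert m (S\<inter>{a..<m})" using v by (cases "v = m") auto
        qed
        show "insert m (S\<inter>{a..<m}) \<subseteq> S\<inter>{a..<b}" using mS by auto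
      qed
      have fin2: "finite (S\<inter>{a..<m})" using assms by simp
      have card: "card (S\<inter>{a..<m}) < n"
        using cn split fin2 by (simp add: card_insert_if)
      have IH: "(\<Sum>v\<in>S\<inter>{a..<m}. \<lfloor>Fu S c v\<rfloor> - \<lfloor>Fl S c v\<rfloor>) = \<lfloor>Fl S c m\<rfloor> - \<lfloor>Fl S c a\<rfloor>"
        using less.IH[OF card] mS by auto
      have "{v\<in>S. v<b} = {v\<in>S. v\<le>m}"
      proof
        show "{v\<in>S. v<b} \<subseteq> {v\<in>S. v\<le>m}"
        proof
          fix v assume v: "v \<in> {v\<in>S. v<b}"
          show "v \<in> {v\<in>S. v\<le>m}"
          proof (cases "v < a")
            case True then show ?thesis using v mS by auto
          next
            case False then show ?thesis using v mx by auto
          qed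
        qed
        show "{v\<in>S. v\<le>m} \<subseteq> {v\<in>S. v<b}" using mS by auto
      qed
      hence "Fl S c b = Fu S c m" by (simp add: Fl_def Fu_def)
      then show ?thesis using split IH fin2 by simp
    qed
  qed
qed

lemma tele:
  assumes "finite S" "a \<le> b"
  shows "(\<Sum>v\<in>S\<inter>{a..b}. \<lfloor>Fu S c v\<rfloor> - \<lfloor>Fl S c v\<rfloor>) = \<lfloor>Fu S c b\<rfloor> - \<lfloor>Fl S c a\<rfloor>"
proof -
  have lt: "(\<Sum>v\<in>S\<inter>{a..<b}. \<lfloor>Fu S c v\<rfloor> - \<lfloor>Fl S c v\<rfloor>) = \<lfloor>Fl S c b\<rfloor> - \<lfloor>Fl S c a\<rfloor>"
    using tele_lt[OF assms(1)] assms(2) by blast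
  show ?thesis
  proof (cases "b \<in> S")
    case True
    have "S\<inter>{a..b} = insert b (S\<inter>{a..<b})" using True assms(2) by auto
    then show ?thesis using lt assms(1) by simp
  next
    case False
    have "S\<inter>{a..b} = S\<inter>{a..<b}" using False by (auto simp: order_le_less)
    then show ?thesis using lt Fu_Fl[OF assms(1), of c b] False by simp
  qed
qed

lemma Fu_Fl_sum:
  assumes "finite S" "a \<le> b"
  shows "Fu S c b - Fl S c a = (\<Sum>v\<in>S\<inter>{a..b}. c v)"
proof -
  have "{v\<in>S. v\<le>b} = {v\<in>S. v<a} \<union> (S\<inter>{a..b})" using assms(2) by auto
  moreover have "{v\<in>S. v<a} \<inter> (S\<inter>{a..b}) = {}" by auto
  ultimately have "Fu S c b = Fl S c a + (\<Sum>v\<in>S\<inter>{a..b}. c v)"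
    unfolding Fu_def Fl_def using assms(1) by (simp add: sum.union_disjoint)
  then show ?thesis by simp
qed

lemma arith_floor:
  fixes x :: "real set \<Rightarrow> real" and I :: "real set set"
  assumes "finite I" "card I \<le> d" "d \<ge> 1" "\<forall>J\<in>I. x J \<ge> 0"
    "(\<Sum>J\<in>I. x J) \<ge> real d * real W"
  shows "(\<Sum>J\<in>I. \<lfloor>x J\<rfloor>) \<ge> int W"
proof (cases "W = 0")
  case True
  have "(\<Sum>J\<in>I. \<lfloor>x J\<rfloor>) \<ge> 0" using assms(4) by (intro sum_nonneg) auto
  then show ?thesis using True by simp
next
  case False
  have ne: "I \<noteq> {}"
  proof
    assume "I = {}"
    then have "real d * real W \<le> 0" using assms(5) by simp
    moreover have "real d * real W > 0" using False assms(3) by simp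
    ultimately show False by simp
  qed
  have "(\<Sum>J\<in>I. x J - 1) < (\<Sum>J\<in>I. real_of_int \<lfloor>x J\<rfloor>)"
    using assms(1) ne by (intro sum_strict_mono) (auto simp: floor_correct)
  hence lt: "(\<Sum>J\<in>I. x J) - real (card I) < real_of_int (\<Sum>J\<in>I. \<lfloor>x J\<rfloor>)"
    by (simp add: sum_subtractf)
  define N where "N = (\<Sum>J\<in>I. \<lfloor>x J\<rfloor>)"
  have "real d * real W - real d < real_of_int N"
    using lt assms(2,5) unfolding N_def by linarith
  hence "real_of_int (int d * int W - int d) < real_of_int N" by simp
  hence "int d * int W - int d < N" by (simp only: of_int_less_iff)
  hence "int d * int W - int d + 1 \<le> N" by linarith
  moreover have "(int d - 1) * (int W - 1) \<ge> 0" using assms(3) False by simp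
  ultimately show ?thesis unfolding N_def by (simp add: algebra_simps)
qed

lemma key:
  assumes fc: "frac_w_cover H w f" and d1: "d \<ge> 1" and dI: "\<forall>h\<in>H. d_interval d h"
  shows "\<exists>g. w_cover H w g \<and> real (\<Sum>v\<in>{v. g v \<noteq> 0}. g v) \<le> real d * (\<Sum>v\<in>{v. f v \<noteq> 0}. f v)"
proof -
  define S where "S = {v. f v \<noteq> 0}"
  have finS: "finite S" using fc unfolding frac_w_cover_def S_def by simp
  have fnn: "\<And>v. f v \<ge> 0" using fc unfolding frac_w_cover_def by simp
  define c where "c = (\<lambda>v. real d * f v)"
  have cnn: "\<And>v. c v \<ge> 0" using fnn unfolding c_def by simp
  define g where "g = (\<lambda>v. nat (\<lfloor>Fu S c v\<rfloor> - \<lfloor>Fl S c v\<rfloor>))"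
  have mono: "\<And>v. \<lfloor>Fl S c v\<rfloor> \<le> \<lfloor>Fu S c v\<rfloor>"
  proof -
    fix v
    have "Fl S c v \<le> Fu S c v" using Fu_Fl[OF finS, of c v] cnn[of v] by simp
    then show "\<lfloor>Fl S c v\<rfloor> \<le> \<lfloor>Fu S c v\<rfloor>" by (rule floor_mono)
  qed
  have gint: "\<And>v. int (g v) = \<lfloor>Fu S c v\<rfloor> - \<lfloor>Fl S c v\<rfloor>"
  proof -
    fix v show "int (g v) = \<lfloor>Fu S c v\<rfloor> - \<lfloor>Fl S c v\<rfloor>"
      unfolding g_def using mono[of v] by linarith
  qed
  have g0: "\<And>v. v \<notin> S \<Longrightarrow> g v = 0"
  proof -
    fix v assume "v \<notin> S"
    then have "Fu S c v = Fl S c v" using Fu_Fl[OF finS, of c v] by simp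
    then show "g v = 0" unfolding g_def by simp
  qed
  have suppg: "{v. g v \<noteq> 0} \<subseteq> S"
  proof
    fix v assume "v \<in> {v. g v \<noteq> 0}"
    then have "g v \<noteq> 0" by simp
    then show "v \<in> S" using g0[of v] by (cases "v \<in> S") simp_all
  qed
  have finsg: "finite {v. g v \<noteq> 0}" by (rule finite_subset[OF suppg finS])
  have sumA: "\<And>A. (\<Sum>v\<in>A \<inter> {v. g v \<noteq> 0}. g v) = (\<Sum>v\<in>A \<inter> S. g v)"
  proof -
    fix A
    show "(\<Sum>v\<in>A \<inter> {v. g v \<noteq> 0}. g v) = (\<Sum>v\<in>A \<inter> S. g v)"
    proof (rule sum.mono_neutral_left)
      show "finite (A \<inter> S)" using finS by simp
      show "A \<inter> {v. g v \<noteq> 0} \<subseteq> A \<inter> S" using suppg by blast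
      show "\<forall>i\<in>A \<inter> S - A \<inter> {v. g v \<noteq> 0}. g i = 0" by simp
    qed
  qed
  have intv: "\<And>a b. a \<le> b \<Longrightarrow> int (\<Sum>v\<in>{a..b} \<inter> S. g v) \<ge> \<lfloor>\<Sum>v\<in>{a..b} \<inter> S. c v\<rfloor>"
  proof -
    fix a b :: real assume ab: "a \<le> b"
    have "int (\<Sum>v\<in>{a..b} \<inter> S. g v) = (\<Sum>v\<in>S \<inter> {a..b}. \<lfloor>Fu S c v\<rfloor> - \<lfloor>Fl S c v\<rfloor>)"
      by (simp add: gint Int_commute)
    also have "\<dots> = \<lfloor>Fu S c b\<rfloor> - \<lfloor>Fl S c a\<rfloor>" using tele[OF finS ab] .
    finally have e1: "int (\<Sum>v\<in>{a..b} \<inter> S. g v) = \<lfloor>Fu S c b\<rfloor> - \<lfloor>Fl S c a\<rfloor>" .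
    have e2: "(\<Sum>v\<in>{a..b} \<inter> S. c v) = Fu S c b - Fl S c a"
      using Fu_Fl_sum[OF finS ab] by (simp add: Int_commute)
    have "\<lfloor>Fu S c b - Fl S c a\<rfloor> + \<lfloor>Fl S c a\<rfloor> \<le> \<lfloor>Fu S c b\<rfloor>"
      using le_floor_add[of "Fu S c b - Fl S c a" "Fl S c a"] by simp
    then show "int (\<Sum>v\<in>{a..b} \<inter> S. g v) \<ge> \<lfloor>\<Sum>v\<in>{a..b} \<inter> S. c v\<rfloor>"
      using e1 e2 by simp
  qed
  have total: "real (\<Sum>v\<in>{v. g v \<noteq> 0}. g v) \<le> real d * (\<Sum>v\<in>S. f v)"
  proof (cases "S = {}")
    case True
    then have "{v. g v \<noteq> 0} = {}" using suppg by blast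
    then show ?thesis using True by simp
  next
    case False
    define a where "a = Min S"
    define b where "b = Max S"
    have ab: "a \<le> b" unfolding a_def b_def using finS False by simp
    have Sab: "S \<inter> {a..b} = S" unfolding a_def b_def using Min_le[OF finS] Max_ge[OF finS] by auto
    have "(\<Sum>v\<in>{v. g v \<noteq> 0}. g v) = (\<Sum>v\<in>S. g v)"
      using sumA[of UNIV] by simp
    hence "int (\<Sum>v\<in>{v. g v \<noteq> 0}. g v) = (\<Sum>v\<in>S. int (g v))" by simp
    also have "\<dots> = (\<Sum>v\<in>S \<inter> {a..b}. \<lfloor>Fu S c v\<rfloor> - \<lfloor>Fl S c v\<rfloor>)" by (simp only: Sab gint)
    also have "\<dots> = \<lfloor>Fu S c b\<rfloor> - \<lfloor>Fl S c a\<rfloor>" by (rule tele[OF finS ab])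
    finally have "int (\<Sum>v\<in>{v. g v \<noteq> 0}. g v) = \<lfloor>Fu S c b\<rfloor> - \<lfloor>Fl S c a\<rfloor>" .
    moreover have "Fl S c a = 0"
    proof -
      have am: "\<forall>v\<in>S. a \<le> v" unfolding a_def using Min_le[OF finS] by blast
      have "{v\<in>S. v < a} = {}"
      proof (rule equals0I)
        fix v assume "v \<in> {v\<in>S. v < a}"
        then show False using am by force
      qed
      then show ?thesis unfolding Fl_def by (metis sum.empty)
    qed
    moreover have "Fu S c b = real d * (\<Sum>v\<in>S. f v)"
    proof -
      have "{v\<in>S. v \<le> b} = S" unfolding b_def using Max_ge[OF finS] by auto
      then show ?thesis by (simp add: Fu_def c_def sum_distrib_left)
    qed
    ultimately have "int (\<Sum>v\<in>{v. g v \<noteq> 0}. g v) = \<lfloor>real d * (\<Sum>v\<in>S. f v)\<rfloor>" by simp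
    hence "real_of_int (int (\<Sum>v\<in>{v. g v \<noteq> 0}. g v)) = real_of_int \<lfloor>real d * (\<Sum>v\<in>S. f v)\<rfloor>" by simp
    then show ?thesis using of_int_floor_le[of "real d * (\<Sum>v\<in>S. f v)"] by simp
  qed
  have cov: "\<forall>h\<in>H. (\<Sum>v\<in>h \<inter> {v. g v \<noteq> 0}. g v) \<ge> w h"
  proof
    fix h assume hH: "h \<in> H"
    have "d_interval d h" using dI hH by blast
    then obtain I where I0: "finite I \<and> card I \<le> d \<and> (\<forall>J\<in>I. \<exists>a b. a \<le> b \<and> J = {a..b}) \<and>
      pairwise disjnt I \<and> h = \<Union>I"
      unfolding d_interval_def by (rule exE)
    have I: "finite I" "card I \<le> d" "\<forall>J\<in>I. \<exists>a b. a \<le> b \<and> J = {a..b}"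
      "pairwise disjnt I" "h = \<Union>I" using I0 by simp_all
    have hS: "h \<inter> S = \<Union>((\<lambda>J. J \<inter> S) ` I)" using I(5) by auto
    have disj: "\<forall>i\<in>I. \<forall>j\<in>I. i \<noteq> j \<longrightarrow> (i \<inter> S) \<inter> (j \<inter> S) = {}"
      using I(4) unfolding pairwise_def disjnt_def by blast
    have fin2: "\<forall>i\<in>I. finite (i \<inter> S)" using finS by simp
    have sg: "(\<Sum>v\<in>h \<inter> S. g v) = (\<Sum>J\<in>I. \<Sum>v\<in>J \<inter> S. g v)"
      unfolding hS using sum.UNION_disjoint[OF I(1) fin2 disj] by simp
    have sf: "(\<Sum>v\<in>h \<inter> S. f v) = (\<Sum>J\<in>I. \<Sum>v\<in>J \<inter> S. f v)"
      unfolding hS using sum.UNION_disjoint[OF I(1) fin2 disj] by simp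
    have wh: "(\<Sum>v\<in>h \<inter> S. f v) \<ge> real (w h)"
      using fc hH unfolding frac_w_cover_def S_def by blast
    define x where "x = (\<lambda>J. \<Sum>v\<in>J \<inter> S. c v)"
    have xs: "(\<Sum>J\<in>I. x J) = real d * (\<Sum>v\<in>h \<inter> S. f v)"
      unfolding x_def c_def sf by (simp add: sum_distrib_left)
    have xg: "(\<Sum>J\<in>I. x J) \<ge> real d * real (w h)"
      unfolding xs by (rule mult_left_mono[OF wh]) simp
    have x0: "\<forall>J\<in>I. x J \<ge> 0" unfolding x_def using cnn by (simp add: sum_nonneg)
    have A: "(\<Sum>J\<in>I. \<lfloor>x J\<rfloor>) \<ge> int (w h)"
      by (rule arith_floor[OF I(1) I(2) d1 x0 xg])
    have B: "\<forall>J\<in>I. \<lfloor>x J\<rfloor> \<le> int (\<Sum>v\<in>J \<inter> S. g v)"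
    proof
      fix J assume "J \<in> I"
      then obtain a b where "a \<le> b" "J = {a..b}" using I(3) by blast
      then show "\<lfloor>x J\<rfloor> \<le> int (\<Sum>v\<in>J \<inter> S. g v)" using intv[of a b] unfolding x_def by simp
    qed
    have "(\<Sum>J\<in>I. \<lfloor>x J\<rfloor>) \<le> (\<Sum>J\<in>I. int (\<Sum>v\<in>J \<inter> S. g v))"
      using B by (intro sum_mono) blast
    also have "\<dots> = int (\<Sum>v\<in>h \<inter> S. g v)" using sg by simp
    finally have "int (w h) \<le> int (\<Sum>v\<in>h \<inter> S. g v)" using A by linarith
    then have "w h \<le> (\<Sum>v\<in>h \<inter> S. g v)" by (simp only: of_nat_le_iff)
    then show "(\<Sum>v\<in>h \<inter> {v. g v \<noteq> 0}. g v) \<ge> w h" unfolding sumA .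
  qed
  have "w_cover H w g" unfolding w_cover_def using finsg cov by simp
  then show ?thesis using total unfolding S_def by blast
qed

theorem theorem1p9:
  fixes d :: nat and H :: "real set set" and w :: "real set \<Rightarrow> nat"
  assumes "d \<ge> 1" and "finite H" and "\<forall>h\<in>H. d_interval d h"
  shows "tau_w H w \<le> ereal (real d) * tau_star_w H w"
proof -
  define C where "C = {g. frac_w_cover H w g}"
  define t where "t = (\<lambda>g::real\<Rightarrow>real. ereal (\<Sum>v\<in>{v. g v \<noteq> 0}. g v))"
  have dpos: "real d > 0" using assms(1) by simp
  have each: "\<And>f. f \<in> C \<Longrightarrow> tau_w H w \<le> ereal (real d) * t f"
  proof -
    fix f assume "f \<in> C"
    then obtain g where g: "w_cover H w g"
      "real (\<Sum>v\<in>{v. g v \<noteq> 0}. g v) \<le> real d * (\<Sum>v\<in>{v. f v \<noteq> 0}. f v)"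
      using key[OF _ assms(1) assms(3)] unfolding C_def by blast
    have "tau_w H w \<le> ereal (real (\<Sum>v\<in>{v. g v \<noteq> 0}. g v))"
      unfolding tau_w_def using g(1) by (intro INF_lower) simp
    also have "\<dots> \<le> ereal (real d) * t f" using g(2) unfolding t_def by simp
    finally show "tau_w H w \<le> ereal (real d) * t f" .
  qed
  have "ereal (real d) * Inf (t ` C) = Inf {ereal (real d) * x |x. x \<in> t ` C}"
    using ereal_Inf_cmult[OF dpos, of "\<lambda>x. x \<in> t ` C"] by simp
  also have "{ereal (real d) * x |x. x \<in> t ` C} = (\<lambda>f. ereal (real d) * t f) ` C" by auto
  finally have eq: "ereal (real d) * tau_star_w H w = (INF f\<in>C. ereal (real d) * t f)"
    unfolding tau_star_w_def C_def t_def by simp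
  show ?thesis unfolding eq by (rule INF_greatest) (rule each)
qed

end
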